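(* Let $A$ be a $C^*$-algebra, let $X$ be a full Hilbert $A$-module, let $H,K$ be Hilbert spaces, and let $\Phi,\Psi\in\mathcal{C}(X,L(H,K))$. Then $\Phi\backsim\Psi$ if and only if there is a partial isometry $V\in L(K)$ with $VV^*=p_{[\Phi(X)H]}$ and $V^*V=p_{[\Psi(X)H]}$ such that $\Phi(x)=V\Psi(x)$ for all $x\in X$.
   Context: A Hilbert $A$-module $X$ is a right $A$-module with an $A$-valued inner product $\langle\cdot,\cdot\rangle$ (conjugate linear in the first and $A$-linear in the second variable) that is complete in the norm $\|x\|=\|\langle x,x\rangle\|^{1/2}$; it is full if the closed two-sided ideal of $A$ generated by $\{\langle x,y\rangle: x,y\in X\}$ is $A$. $L(H,K)$ denotes the bounded linear operators from $H$ to $K$, $L(K)=L(K,K)$. A map $\Phi:X\to L(H,K)$ is called completely positive if there is a completely positive map $\varphi:A\to L(H)$ such that $\Phi(x)^*\Phi(y)=\varphi(\langle x,y\rangle)$ for all $x,y\in X$; $\mathcal{C}(X,L(H,K))$ denotes the set of all such maps. For $\Phi,\Psi\in\mathcal{C}(X,L(H,K))$, write $\Phi\backsim\Psi$ if $\Phi(x)^*\Phi(x)=\Psi(x)^*\Psi(x)$ for all $x\in X$. For a subset $Y$ of a Hilbert space, $[Y]$ denotes the closed linear span of $Y$; $\Phi(X)H=\{\Phi(x)h:x\in X,h\in H\}$; $p_M$ denotes the orthogonal projection onto a closed subspace $M$. *)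

theory Defs
  imports "HOL-Analysis.Analysis"
begin

class complex_vector = real_vector +
  fixes scaleC :: "complex \<Rightarrow> 'a \<Rightarrow> 'a"
  assumes scaleC_add_right: "scaleC c (x + y) = scaleC c x + scaleC c y"
    and scaleC_add_left: "scaleC (c + d) x = scaleC c x + scaleC d x"
    and scaleC_scaleC: "scaleC c (scaleC d x) = scaleC (c * d) x"
    and scaleC_one: "scaleC 1 x = x"
    and scaleR_scaleC: "scaleR r x = scaleC (complex_of_real r) x"

class complex_normed_vector = complex_vector + real_normed_vector +
  assumes norm_scaleC: "norm (scaleC c x) = cmod c * norm x"

class complex_banach = complex_normed_vector + complete_space

class complex_inner = complex_normed_vector +
  fixes cinner :: "'a \<Rightarrow> 'a \<Rightarrow> complex"
  assumes cinner_commute: "cinner x y = cnj (cinner y x)"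
    and cinner_add_left: "cinner (x + y) z = cinner x z + cinner y z"
    and cinner_scaleC_left: "cinner (scaleC c x) y = cnj c * cinner x y"
    and cinner_nonneg: "Re (cinner x x) \<ge> 0"
    and cinner_eq_zero_iff: "cinner x x = 0 \<longleftrightarrow> x = 0"
    and norm_eq_sqrt_cinner: "norm x = sqrt (Re (cinner x x))"

class chilbert_space = complex_inner + complete_space

class complex_algebra = complex_vector + ring +
  assumes scaleC_mult_left: "scaleC c x * y = scaleC c (x * y)"
    and scaleC_mult_right: "x * scaleC c y = scaleC c (x * y)"

class complex_normed_algebra = complex_algebra + complex_normed_vector +
  assumes norm_mult_ineq_C: "norm (x * y) \<le> norm x * norm y"

class cstar_algebra = complex_normed_algebra + complete_space +
  fixes cstar :: "'a \<Rightarrow> 'a"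
  assumes cstar_cstar: "cstar (cstar x) = x"
    and cstar_add: "cstar (x + y) = cstar x + cstar y"
    and cstar_scaleC: "cstar (scaleC c x) = scaleC (cnj c) (cstar x)"
    and cstar_mult: "cstar (x * y) = cstar y * cstar x"
    and cstar_identity: "norm (cstar x * x) = (norm x)\<^sup>2"

definition cpositive :: "'a::cstar_algebra \<Rightarrow> bool" where
  "cpositive a \<longleftrightarrow> (\<exists>b. a = cstar b * b)"

definition hilbert_module ::
  "('x::complex_banach \<Rightarrow> 'a::cstar_algebra \<Rightarrow> 'x) \<Rightarrow> ('x \<Rightarrow> 'x \<Rightarrow> 'a) \<Rightarrow> bool" where
  "hilbert_module act ip \<longleftrightarrow>
     (\<forall>x y a. act (x + y) a = act x a + act y a) \<and>
     (\<forall>x a b. act x (a + b) = act x a + act x b) \<and>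
     (\<forall>x a b. act x (a * b) = act (act x a) b) \<and>
     (\<forall>c x a. act (scaleC c x) a = scaleC c (act x a)) \<and>
     (\<forall>c x a. act x (scaleC c a) = scaleC c (act x a)) \<and>
     (\<forall>x y z. ip x (y + z) = ip x y + ip x z) \<and>
     (\<forall>c x y. ip x (scaleC c y) = scaleC c (ip x y)) \<and>
     (\<forall>x y a. ip x (act y a) = ip x y * a) \<and>
     (\<forall>x y. ip y x = cstar (ip x y)) \<and>
     (\<forall>x. cpositive (ip x x)) \<and>
     (\<forall>x. ip x x = 0 \<longrightarrow> x = 0) \<and>
     (\<forall>x. norm x = sqrt (norm (ip x x)))"

definition csubspace :: "'a::complex_vector set \<Rightarrow> bool" where
  "csubspace M \<longleftrightarrow> 0 \<in> M \<and> (\<forall>x\<in>M. \<forall>y\<in>M. x + y \<in> M) \<and> (\<forall>c. \<forall>x\<in>M. scaleC c x \<in> M)"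

definition closed_ideal :: "'a::cstar_algebra set \<Rightarrow> bool" where
  "closed_ideal I \<longleftrightarrow> csubspace I \<and> closed I \<and> (\<forall>a. \<forall>i\<in>I. a * i \<in> I \<and> i * a \<in> I)"

definition full_module :: "('x \<Rightarrow> 'x \<Rightarrow> 'a::cstar_algebra) \<Rightarrow> bool" where
  "full_module ip \<longleftrightarrow>
     \<Inter>{I. closed_ideal I \<and> {ip x y | x y. True} \<subseteq> I} = UNIV"

definition bclinear :: "('h::complex_normed_vector \<Rightarrow> 'k::complex_normed_vector) \<Rightarrow> bool" where
  "bclinear T \<longleftrightarrow> (\<forall>x y. T (x + y) = T x + T y) \<and> (\<forall>c x. T (scaleC c x) = scaleC c (T x)) \<and>
     (\<exists>C. \<forall>x. norm (T x) \<le> C * norm x)"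

definition adj :: "('h::complex_inner \<Rightarrow> 'k::complex_inner) \<Rightarrow> ('k \<Rightarrow> 'h)" where
  "adj T = (SOME S. \<forall>x y. cinner (T x) y = cinner x (S y))"

definition ccspan :: "'a::complex_normed_vector set \<Rightarrow> 'a set" where
  "ccspan S = \<Inter>{M. csubspace M \<and> closed M \<and> S \<subseteq> M}"

definition proj :: "'a::chilbert_space set \<Rightarrow> ('a \<Rightarrow> 'a)" where
  "proj M = (THE P. \<forall>x. P x \<in> M \<and> (\<forall>m\<in>M. cinner m (x - P x) = 0))"

definition partial_isometry :: "('k::chilbert_space \<Rightarrow> 'k) \<Rightarrow> bool" where
  "partial_isometry V \<longleftrightarrow> bclinear V \<and> V \<circ> adj V \<circ> V = V"

text \<open>Matrices in M_n(A) are represented as functions nat => nat => 'a, entries with indices < n.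
  An operator matrix in M_n(L(H)) is positive iff it is a positive operator on H^n.\<close>
definition positive_matrix :: "nat \<Rightarrow> (nat \<Rightarrow> nat \<Rightarrow> 'a::cstar_algebra) \<Rightarrow> bool" where
  "positive_matrix n M \<longleftrightarrow>
     (\<exists>B. \<forall>i<n. \<forall>j<n. M i j = (\<Sum>k<n. cstar (B k i) * B k j))"

definition positive_op_matrix :: "nat \<Rightarrow> (nat \<Rightarrow> nat \<Rightarrow> 'h::chilbert_space \<Rightarrow> 'h) \<Rightarrow> bool" where
  "positive_op_matrix n T \<longleftrightarrow>
     (\<forall>h::nat \<Rightarrow> 'h. Im (\<Sum>i<n. \<Sum>j<n. cinner (h i) (T i j (h j))) = 0 \<and>
                     Re (\<Sum>i<n. \<Sum>j<n. cinner (h i) (T i j (h j))) \<ge> 0)"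

definition completely_positive :: "('a::cstar_algebra \<Rightarrow> 'h::chilbert_space \<Rightarrow> 'h) \<Rightarrow> bool" where
  "completely_positive \<phi> \<longleftrightarrow>
     (\<forall>a. bclinear (\<phi> a)) \<and>
     (\<forall>a b. \<phi> (a + b) = (\<lambda>h. \<phi> a h + \<phi> b h)) \<and>
     (\<forall>c a. \<phi> (scaleC c a) = (\<lambda>h. scaleC c (\<phi> a h))) \<and>
     (\<forall>n M. positive_matrix n M \<longrightarrow> positive_op_matrix n (\<lambda>i j. \<phi> (M i j)))"

definition CP_maps :: "('x \<Rightarrow> 'x \<Rightarrow> 'a::cstar_algebra) \<Rightarrow> ('x \<Rightarrow> 'h::chilbert_space \<Rightarrow> 'k::chilbert_space) set" where
  "CP_maps ip = {\<Phi>. (\<forall>x. bclinear (\<Phi> x)) \<and>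
     (\<exists>\<phi>::'a \<Rightarrow> 'h \<Rightarrow> 'h. completely_positive \<phi> \<and> (\<forall>x y. adj (\<Phi> x) \<circ> \<Phi> y = \<phi> (ip x y)))}"

definition cp_equiv :: "('x \<Rightarrow> 'h::chilbert_space \<Rightarrow> 'k::chilbert_space) \<Rightarrow> ('x \<Rightarrow> 'h \<Rightarrow> 'k) \<Rightarrow> bool" where
  "cp_equiv \<Phi> \<Psi> \<longleftrightarrow> (\<forall>x. adj (\<Phi> x) \<circ> \<Phi> x = adj (\<Psi> x) \<circ> \<Psi> x)"

end

theory Submission
  imports Defs
begin


lemma scaleC_zero_left[simp]: "scaleC 0 (x::'a::complex_vector) = 0"
  by (metis of_real_0 scaleR_scaleC scaleR_zero_left)
lemma scaleC_ofreal: "scaleC (complex_of_real r) (x::'a::complex_vector) = scaleR r x"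
  by (simp add: scaleR_scaleC)
lemma scaleC_minus1: "scaleC (-1) (x::'a::complex_vector) = - x"
  by (metis of_real_1 of_real_minus scaleR_minus1_left scaleR_scaleC)
lemma scaleC_zero_right[simp]: "scaleC c (0::'a::complex_vector) = 0"
  by (metis add_cancel_right_right scaleC_add_right)
lemma scaleC_minus_right: "scaleC c (- x::'a::complex_vector) = - scaleC c x"
  by (metis mult.commute scaleC_minus1 scaleC_scaleC)
lemma scaleC_diff_right: "scaleC c (x - y::'a::complex_vector) = scaleC c x - scaleC c y"
  by (metis diff_conv_add_uminus scaleC_add_right scaleC_minus_right)
lemma scaleC_minus_left: "scaleC (-c) (x::'a::complex_vector) = - scaleC c x"
  by (metis mult_minus1 scaleC_minus1 scaleC_scaleC)
lemma scaleC_diff_left: "scaleC (c - d) (x::'a::complex_vector) = scaleC c x - scaleC d x"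
  by (metis diff_conv_add_uminus scaleC_add_left scaleC_minus_left)
lemma scaleC_sum_list: "scaleC c (sum_list (xs::'a::complex_vector list)) = sum_list (map (scaleC c) xs)"
  by (induction xs) (auto simp: scaleC_add_right)




lemma cinner_add_right: "cinner (x::'a::complex_inner) (y + z) = cinner x y + cinner x z"
proof -
  have "cinner x (y+z) = cnj (cinner (y+z) x)" by (rule cinner_commute)
  also have "\<dots> = cnj (cinner y x) + cnj (cinner z x)" by (simp add: cinner_add_left)
  finally show ?thesis by (simp add: cinner_commute[of x y, symmetric] cinner_commute[of x z, symmetric])
qed
lemma cinner_scaleC_right: "cinner (x::'a::complex_inner) (scaleC c y) = c * cinner x y"
proof -
  have "cinner x (scaleC c y) = cnj (cinner (scaleC c y) x)" by (rule cinner_commute)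
  also have "\<dots> = c * cnj (cinner y x)" by (simp add: cinner_scaleC_left)
  finally show ?thesis by (simp add: cinner_commute[of x y, symmetric])
qed
lemma cinner_zero_left[simp]: "cinner 0 (x::'a::complex_inner) = 0"
  using cinner_add_left[of 0 0 x] by simp
lemma cinner_zero_right[simp]: "cinner (x::'a::complex_inner) 0 = 0"
  using cinner_add_right[of x 0 0] by simp
lemma cinner_minus_left: "cinner (- x) (y::'a::complex_inner) = - cinner x y"
proof -
  have "cinner x y + cinner (-x) y = 0" using cinner_add_left[of x "-x" y] by simp
  thus ?thesis by (simp add: add_eq_0_iff)
qed
lemma cinner_minus_right: "cinner y (- x::'a::complex_inner) = - cinner y x"
proof -
  have "cinner y x + cinner y (-x) = 0" using cinner_add_right[of y x "-x"] by simp
  thus ?thesis by (simp add: add_eq_0_iff)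
qed
lemma cinner_diff_left: "cinner (x - z) (y::'a::complex_inner) = cinner x y - cinner z y"
  unfolding diff_conv_add_uminus cinner_add_left cinner_minus_left by (rule refl)
lemma cinner_diff_right: "cinner y (x - z::'a::complex_inner) = cinner y x - cinner y z"
  unfolding diff_conv_add_uminus cinner_add_right cinner_minus_right by (rule refl)
lemma cinner_self: "cinner x (x::'a::complex_inner) = complex_of_real ((norm x)^2)"
proof -
  have h: "cinner x x = cnj (cinner x x)" by (rule cinner_commute)
  have "Im (cinner x x) = - Im (cinner x x)" using arg_cong[OF h, of Im] by simp
  hence "Im (cinner x x) = 0" by simp
  moreover have "Re (cinner x x) = (norm x)^2" using norm_eq_sqrt_cinner[of x] cinner_nonneg[of x] by simp
  ultimately show ?thesis by (simp add: complex_eq_iff)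
qed
lemma cinner_scaleR_left: "cinner (scaleR r x) (y::'a::complex_inner) = complex_of_real r * cinner x y"
  by (simp add: scaleR_scaleC cinner_scaleC_left)
lemma cinner_scaleR_right: "cinner y (scaleR r x::'a::complex_inner) = complex_of_real r * cinner y x"
  by (simp add: scaleR_scaleC cinner_scaleC_right)



lemma dist_expansion:
  fixes x y :: "'a::complex_inner"
  assumes "y \<noteq> 0"
  shows "(norm (x - scaleC (cinner y x / complex_of_real ((norm y)^2)) y))^2
     = (norm x)^2 - (cmod (cinner y x))^2 / (norm y)^2"
proof -
  define a where "a = cinner y x"
  define N where "N = (norm y)^2"
  define t where "t = a / complex_of_real N"
  have N: "N > 0" using assms by (simp add: N_def)
  have cxy: "cinner x y = cnj a" unfolding a_def by (rule cinner_commute)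
  have cyy: "cinner y y = complex_of_real N" unfolding N_def by (rule cinner_self)
  have "complex_of_real ((norm (x - scaleC t y))^2) = cinner (x - scaleC t y) (x - scaleC t y)"
    by (simp only: cinner_self)
  also have "\<dots> = cinner x x - cnj t * cinner y x - t * (cinner x y - cnj t * cinner y y)"
    unfolding cinner_diff_left cinner_diff_right cinner_scaleC_left cinner_scaleC_right by (rule refl)
  also have "\<dots> = cinner x x - cnj t * a - t * (cnj a - cnj t * complex_of_real N)"
    unfolding cxy cyy a_def by (rule refl)
  also have "\<dots> = cinner x x - a * cnj a / complex_of_real N"
  proof -
    have ct: "cnj t = cnj a / complex_of_real N" by (simp add: t_def)
    have "cnj t * complex_of_real N = cnj a" using N unfolding ct by simp
    hence "cinner x x - cnj t * a - t * (cnj a - cnj t * complex_of_real N) = cinner x x - cnj a / complex_of_real N * a"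
      unfolding ct by simp
    thus ?thesis by simp
  qed
  also have "\<dots> = complex_of_real ((norm x)^2 - (cmod a)^2 / N)"
    using complex_norm_square[of a] by (simp add: cinner_self)
  finally show ?thesis unfolding a_def N_def t_def using of_real_eq_iff by blast
qed

lemma cauchy_schwarz: "cmod (cinner x y) \<le> norm x * norm (y::'a::complex_inner)"
proof (cases "x = 0")
  case True thus ?thesis by simp
next
  case False
  have "0 \<le> (norm y)^2 - (cmod (cinner x y))^2 / (norm x)^2"
    unfolding dist_expansion[OF False, of y, symmetric] by (rule zero_le_power2)
  hence h: "(cmod (cinner x y))^2 / (norm x)^2 \<le> (norm y)^2" by linarith
  have nx: "(norm x)^2 > 0" using False by simp
  have "(cmod (cinner x y))^2 \<le> (norm y)^2 * (norm x)^2" using h nx by (simp add: pos_divide_le_eq)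
  hence "(cmod (cinner x y))^2 \<le> (norm x * norm y)^2" by (simp add: power_mult_distrib mult.commute)
  thus ?thesis by (rule power2_le_imp_le) simp
qed



lemma bl_cinner_left: "bounded_linear (\<lambda>x::'a::complex_inner. cinner x c)"
  apply (rule bounded_linear_intro[where K="norm c"])
    apply (simp add: cinner_add_left)
   apply (simp add: cinner_scaleR_left scaleR_conv_of_real)
  using cauchy_schwarz by (metis norm_conv_dist)
lemma bl_cinner_right: "bounded_linear (\<lambda>x::'a::complex_inner. cinner c x)"
  apply (rule bounded_linear_intro[where K="norm c"])
    apply (simp add: cinner_add_right)
   apply (simp add: cinner_scaleR_right scaleR_conv_of_real)
  using cauchy_schwarz by (metis mult.commute)
lemma bl_scaleC: "bounded_linear (\<lambda>x::'a::complex_normed_vector. scaleC c x)"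
  apply (rule bounded_linear_intro[where K="cmod c"])
    apply (simp add: scaleC_add_right)
   apply (simp add: scaleR_scaleC scaleC_scaleC mult.commute)
  by (simp add: norm_scaleC mult.commute)

lemma csubspace_0: "csubspace M \<Longrightarrow> 0 \<in> M" by (simp add: csubspace_def)
lemma csubspace_add: "csubspace M \<Longrightarrow> x \<in> M \<Longrightarrow> y \<in> M \<Longrightarrow> x + y \<in> M" by (simp add: csubspace_def)
lemma csubspace_scaleC: "csubspace M \<Longrightarrow> x \<in> M \<Longrightarrow> scaleC c x \<in> M" by (simp add: csubspace_def)
lemma csubspace_minus: "csubspace M \<Longrightarrow> x \<in> M \<Longrightarrow> - x \<in> M"
  using csubspace_scaleC[of M x "-1"] by (simp add: scaleC_minus1)
lemma csubspace_diff: "csubspace M \<Longrightarrow> x \<in> M \<Longrightarrow> y \<in> M \<Longrightarrow> x - y \<in> M"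
  by (simp add: csubspace_add csubspace_minus diff_conv_add_uminus del: add_uminus_conv_diff)
lemma csubspace_scaleR: "csubspace M \<Longrightarrow> x \<in> M \<Longrightarrow> scaleR r x \<in> M"
  by (simp add: csubspace_scaleC scaleR_scaleC)

lemma norm_sq_cinner: "(norm x)^2 = Re (cinner x (x::'a::complex_inner))"
  by (simp add: cinner_self)

lemma parallelogram:
  fixes a b :: "'a::complex_inner"
  shows "(norm (a + b))^2 + (norm (a - b))^2 = 2 * (norm a)^2 + 2 * (norm b)^2"
  unfolding norm_sq_cinner cinner_add_left cinner_add_right cinner_diff_left cinner_diff_right
  by simp

lemma proj_exists:
  fixes x :: "'a::chilbert_space"
  assumes sub: "csubspace M" and cl: "closed M"
  shows "\<exists>p\<in>M. \<forall>m\<in>M. cinner m (x - p) = 0"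
proof -
  define d where "d = (INF m\<in>M. norm (x - m))"
  have ne: "(\<lambda>m. norm (x - m)) ` M \<noteq> {}" using csubspace_0[OF sub] by auto
  have bdd: "bdd_below ((\<lambda>m. norm (x - m)) ` M)" by (rule bdd_belowI[of _ 0]) auto
  have dle: "d \<le> norm (x - m)" if "m \<in> M" for m
    unfolding d_def using bdd that by (rule cINF_lower)
  have d0: "0 \<le> d" unfolding d_def by (rule cINF_greatest) (use csubspace_0[OF sub] in auto)
  have "\<forall>n. \<exists>m. m \<in> M \<and> norm (x - m) < d + inverse (real (Suc n))"
  proof
    fix n
    have "d < d + inverse (real (Suc n))" by simp
    then obtain m where "m \<in> M" "norm (x - m) < d + inverse (real (Suc n))"
      using cINF_less_iff[OF _ bdd] ne unfolding d_def by blast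
    thus "\<exists>m. m \<in> M \<and> norm (x - m) < d + inverse (real (Suc n))" by blast
  qed
  then obtain f where fM: "\<And>n. f n \<in> M" and fd: "\<And>n. norm (x - f n) < d + inverse (real (Suc n))"
    by metis
  have key: "(norm (f k - f n))^2 \<le> 4 * (2*d+1) * inverse (real (Suc N))" if "n \<ge> N" "k \<ge> N" for n k N
  proof -
    define e where "e = inverse (real (Suc N))"
    have e0: "0 < e" "e \<le> 1" by (auto simp: e_def inverse_le_1_iff)
    have en: "inverse (real (Suc n)) \<le> e" "inverse (real (Suc k)) \<le> e"
      using that by (auto simp: e_def intro!: le_imp_inverse_le)
    define a where "a = x - f n"
    define b where "b = x - f k"
    have mid: "scaleR (1/2) (f n + f k) \<in> M"
      using fM by (intro csubspace_scaleR[OF sub] csubspace_add[OF sub])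
    have "a + b = scaleR 2 (x - scaleR (1/2) (f n + f k))"
      unfolding a_def b_def by (simp add: algebra_simps scaleR_2)
    hence "norm (a + b) = 2 * norm (x - scaleR (1/2) (f n + f k))" by simp
    hence ab: "norm (a + b) \<ge> 2 * d" using dle[OF mid] by simp
    have ab2: "(norm (a + b))^2 \<ge> (2*d)^2" by (rule power_mono[OF ab]) (use d0 in simp)
    have amb: "a - b = f k - f n" unfolding a_def b_def by simp
    have na: "norm a \<le> d + e" using fd[of n] en unfolding a_def by linarith
    have nb: "norm b \<le> d + e" using fd[of k] en unfolding b_def by linarith
    have na2: "(norm a)^2 \<le> (d+e)^2" by (rule power_mono[OF na]) simp
    have nb2: "(norm b)^2 \<le> (d+e)^2" by (rule power_mono[OF nb]) simp
    have "(norm (f k - f n))^2 = 2 * (norm a)^2 + 2 * (norm b)^2 - (norm (a + b))^2"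
      using parallelogram[of a b] unfolding amb by linarith
    also have "\<dots> \<le> 4 * (d+e)^2 - 4 * d^2" using na2 nb2 ab2 by (simp add: power_mult_distrib)
    also have "\<dots> = 4 * (2*d*e + e*e)" by (simp add: power2_eq_square algebra_simps)
    also have "\<dots> \<le> 4 * (2*d*e + e)" using e0 by (simp add: mult_left_le)
    also have "\<dots> = 4 * (2*d+1) * e" by (simp add: algebra_simps)
    finally show ?thesis unfolding e_def .
  qed
  have "Cauchy f"
  proof (rule CauchyI)
    fix e :: real assume e: "0 < e"
    obtain N where N: "4 * (2*d+1) / e^2 < real N" using reals_Archimedean2 by blast
    have "4 * (2*d+1) * inverse (real (Suc N)) < e^2"
    proof -
      have "4 * (2*d+1) < real N * e^2" using N e by (simp add: divide_less_eq)
      also have "\<dots> \<le> real (Suc N) * e^2" using e by simp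
      finally show ?thesis by (simp add: field_simps)
    qed
    hence "\<forall>m\<ge>N. \<forall>n\<ge>N. norm (f m - f n) < e"
      using key e by (meson le_less_trans power2_less_imp_less less_imp_le)
    thus "\<exists>M. \<forall>m\<ge>M. \<forall>n\<ge>M. norm (f m - f n) < e" by blast
  qed
  then obtain p where p: "f \<longlonglongrightarrow> p" using Cauchy_convergent_iff convergent_def by blast
  have pM: "p \<in> M" using cl fM p closed_sequential_limits by blast
  have "norm (x - p) \<le> d"
  proof (rule LIMSEQ_le)
    show "(\<lambda>n. norm (x - f n)) \<longlonglongrightarrow> norm (x - p)" by (intro tendsto_intros p)
    show "(\<lambda>n. d + inverse (real (Suc n))) \<longlonglongrightarrow> d"
      using tendsto_add[OF tendsto_const LIMSEQ_inverse_real_of_nat, of d] by simp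
    show "\<exists>N. \<forall>n\<ge>N. norm (x - f n) \<le> d + inverse (real (Suc n))" using fd less_imp_le by blast
  qed
  hence minp: "norm (x - p) \<le> norm (x - m)" if "m \<in> M" for m using dle[OF that] by linarith
  have "\<forall>m\<in>M. cinner m (x - p) = 0"
  proof
    fix m assume mM: "m \<in> M"
    show "cinner m (x - p) = 0"
    proof (cases "m = 0")
      case True thus ?thesis by simp
    next
      case False
      define t where "t = cinner m (x - p) / complex_of_real ((norm m)^2)"
      have "p + scaleC t m \<in> M" using pM mM sub by (simp add: csubspace_add csubspace_scaleC)
      hence "norm (x - p) \<le> norm (x - (p + scaleC t m))" by (rule minp)
      also have "x - (p + scaleC t m) = (x - p) - scaleC t m" by simp
      finally have "(norm (x - p))^2 \<le> (norm ((x - p) - scaleC t m))^2" by (rule power_mono) simp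
      also have "\<dots> = (norm (x - p))^2 - (cmod (cinner m (x - p)))^2 / (norm m)^2"
        unfolding t_def by (rule dist_expansion[OF False])
      finally have "(cmod (cinner m (x - p)))^2 / (norm m)^2 \<le> 0" by simp
      moreover have "(norm m)^2 > 0" using False by simp
      ultimately have "(cmod (cinner m (x - p)))^2 \<le> 0" by (simp add: divide_le_0_iff)
      thus ?thesis by simp
    qed
  qed
  thus ?thesis using pM by blast
qed



lemma cinner_ext_right:
  fixes x y :: "'a::complex_inner"
  assumes "\<And>z. cinner z x = cinner z y" shows "x = y"
proof -
  have "cinner (x - y) (x - y) = 0" unfolding cinner_diff_right using assms by simp
  thus ?thesis by (simp add: cinner_eq_zero_iff)
qed

lemma cinner_ext_left:
  fixes x y :: "'a::complex_inner"
  assumes "\<And>z. cinner x z = cinner y z" shows "x = y"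
proof (rule cinner_ext_right)
  fix z
  have "cinner z x = cnj (cinner x z)" by (rule cinner_commute)
  also have "\<dots> = cnj (cinner y z)" using assms by simp
  also have "\<dots> = cinner z y" by (rule cinner_commute[symmetric])
  finally show "cinner z x = cinner z y" .
qed

definition projp :: "'a::chilbert_space set \<Rightarrow> 'a \<Rightarrow> 'a \<Rightarrow> bool" where
  "projp M x p \<longleftrightarrow> p \<in> M \<and> (\<forall>m\<in>M. cinner m (x - p) = 0)"

lemma projp_unique:
  assumes sub: "csubspace M" and "projp M x p" "projp M x q" shows "p = q"
proof -
  have pq: "p - q \<in> M" using assms by (simp add: projp_def csubspace_diff)
  have "cinner (p - q) (x - q) - cinner (p - q) (x - p) = 0" using assms pq by (simp add: projp_def)
  hence "cinner (p - q) (p - q) = 0" unfolding cinner_diff_right by simp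
  thus ?thesis by (simp add: cinner_eq_zero_iff)
qed

lemma proj_char:
  assumes sub: "csubspace M" and cl: "closed M"
  shows "projp M x (proj M x)"
proof -
  define P where "P = (\<lambda>x. SOME p. projp M x p)"
  have P: "projp M x (P x)" for x
    unfolding P_def by (rule someI_ex) (use proj_exists[OF sub cl, of x] in \<open>auto simp: projp_def\<close>)
  have ex1: "\<exists>!P. \<forall>x. P x \<in> M \<and> (\<forall>m\<in>M. cinner m (x - P x) = 0)"
  proof (rule ex1I[of _ P])
    show "\<forall>x. P x \<in> M \<and> (\<forall>m\<in>M. cinner m (x - P x) = 0)" using P by (simp add: projp_def)
    fix Q assume "\<forall>x. Q x \<in> M \<and> (\<forall>m\<in>M. cinner m (x - Q x) = 0)"
    hence "projp M x (Q x)" for x by (simp add: projp_def)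
    thus "Q = P" using P projp_unique[OF sub] by blast
  qed
  show ?thesis using theI'[OF ex1] unfolding proj_def projp_def by blast
qed

lemma proj_in: assumes "csubspace M" "closed M" shows "proj M x \<in> M"
  using proj_char[OF assms, of x] unfolding projp_def by blast
lemma proj_orth: assumes "csubspace M" "closed M" "m \<in> M" shows "cinner m (x - proj M x) = 0"
  using proj_char[OF assms(1,2), of x] assms(3) unfolding projp_def by blast
lemma proj_eqI: assumes "csubspace M" "closed M" "projp M x p" shows "proj M x = p"
  using projp_unique[OF assms(1) proj_char[OF assms(1,2), of x] assms(3)] .
lemma proj_id: assumes "csubspace M" "closed M" "m \<in> M" shows "proj M m = m"
  using assms(3) by (intro proj_eqI[OF assms(1,2)]) (simp add: projp_def)
lemma proj_add: assumes "csubspace M" "closed M" shows "proj M (x + y) = proj M x + proj M y"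
proof (rule proj_eqI[OF assms])
  have e: "x + y - (proj M x + proj M y) = (x - proj M x) + (y - proj M y)" by simp
  have "\<forall>m\<in>M. cinner m (x + y - (proj M x + proj M y)) = 0"
    unfolding e cinner_add_right using proj_orth[OF assms] by simp
  thus "projp M (x + y) (proj M x + proj M y)" unfolding projp_def
    using assms by (simp add: proj_in csubspace_add)
qed
lemma proj_scaleC: assumes "csubspace M" "closed M" shows "proj M (scaleC c x) = scaleC c (proj M x)"
proof (rule proj_eqI[OF assms])
  have e: "scaleC c x - scaleC c (proj M x) = scaleC c (x - proj M x)" by (simp add: scaleC_diff_right)
  have "\<forall>m\<in>M. cinner m (scaleC c x - scaleC c (proj M x)) = 0"
    unfolding e cinner_scaleC_right using proj_orth[OF assms] by simp
  thus "projp M (scaleC c x) (scaleC c (proj M x))" unfolding projp_def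
    using assms by (simp add: proj_in csubspace_scaleC)
qed
lemma proj_norm: assumes "csubspace M" "closed M" shows "norm (proj M x) \<le> norm x"
proof -
  define p where "p = proj M x"
  have o: "cinner p (x - p) = 0" unfolding p_def using assms by (simp add: proj_in proj_orth)
  have o2: "cinner (x - p) p = 0" using cinner_commute[of "x-p" p] o by simp
  have "(norm x)^2 = Re (cinner (p + (x - p)) (p + (x - p)))" by (simp add: norm_sq_cinner)
  also have "\<dots> = (norm p)^2 + (norm (x - p))^2"
    unfolding cinner_add_left cinner_add_right o o2 by (simp add: norm_sq_cinner)
  finally have "(norm p)^2 \<le> (norm x)^2" by simp
  thus ?thesis unfolding p_def by (rule power2_le_imp_le) simp
qed

lemma riesz:
  fixes f :: "'a::chilbert_space \<Rightarrow> complex"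
  assumes add: "\<And>x y. f (x + y) = f x + f y" and sc: "\<And>c x. f (scaleC c x) = c * f x"
    and bd: "\<And>x. norm (f x) \<le> norm x * K"
  shows "\<exists>w. \<forall>x. f x = cinner w x"
proof (cases "\<forall>x. f x = 0")
  case True thus ?thesis by (intro exI[of _ 0]) simp
next
  case False
  then obtain x0 where x0: "f x0 \<noteq> 0" by blast
  have bl: "bounded_linear f"
    by (rule bounded_linear_intro[OF add _ bd]) (simp add: scaleR_scaleC sc scaleR_conv_of_real)
  have fminus: "f (a - b) = f a - f b" for a b using bl by (simp add: linear_simps)
  define N where "N = {x. f x = 0}"
  have f0: "f 0 = 0" using bl by (simp add: linear_simps)
  have subN: "csubspace N" unfolding N_def csubspace_def using add sc f0 by simp
  have clN: "closed N" unfolding N_def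
    by (rule closed_Collect_eq) (auto intro: linear_continuous_on bl continuous_on_const)
  obtain p where pN: "p \<in> N" and orth: "\<forall>m\<in>N. cinner m (x0 - p) = 0" using proj_exists[OF subN clN] by blast
  define u where "u = x0 - p"
  have fu: "f u \<noteq> 0" using x0 pN unfolding u_def N_def by (simp add: fminus)
  have u0: "u \<noteq> 0" using fu bl by (metis linear_simps(3))
  define nu where "nu = complex_of_real ((norm u)^2)"
  have nu0: "nu \<noteq> 0" using u0 by (simp add: nu_def)
  have "f x = cinner (scaleC (cnj (f u) / nu) u) x" for x
  proof -
    define z where "z = x - scaleC (f x / f u) u"
    have "f z = 0" unfolding z_def using fu by (simp add: fminus sc)
    hence "cinner z u = 0" using orth unfolding N_def u_def by simp
    hence "cinner x u - cnj (f x / f u) * nu = 0"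
      unfolding z_def cinner_diff_left cinner_scaleC_left nu_def cinner_self[symmetric] .
    hence "cinner x u = cnj (f x / f u) * nu" by simp
    hence "cnj (cinner x u) = (f x / f u) * cnj nu" by simp
    hence "cinner u x = (f x / f u) * nu" by (simp add: cinner_commute[of u x] nu_def)
    hence "f x = f u * cinner u x / nu" using fu nu0 by (simp add: field_simps)
    thus ?thesis by (simp add: cinner_scaleC_left nu_def)
  qed
  thus ?thesis by blast
qed

lemma adj_exists:
  fixes T :: "'h::chilbert_space \<Rightarrow> 'k::chilbert_space"
  assumes "bclinear T"
  shows "\<forall>x y. cinner (T x) y = cinner x (adj T y)"
proof -
  obtain C where C: "\<And>x. norm (T x) \<le> C * norm x" using assms unfolding bclinear_def by blast
  have Tadd: "T (x + y) = T x + T y" for x y using assms unfolding bclinear_def by blast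
  have Tsc: "T (scaleC c x) = scaleC c (T x)" for c x using assms unfolding bclinear_def by blast
  have "\<forall>y. \<exists>w. \<forall>x. cinner (T x) y = cinner x w"
  proof
    fix y
    have "\<exists>w. \<forall>x. cinner y (T x) = cinner w x"
    proof (rule riesz)
      show "cinner y (T (x1 + x2)) = cinner y (T x1) + cinner y (T x2)" for x1 x2
        by (simp add: Tadd cinner_add_right)
      show "cinner y (T (scaleC c x)) = c * cinner y (T x)" for c x
        by (simp add: Tsc cinner_scaleC_right)
      show "norm (cinner y (T x)) \<le> norm x * (norm y * C)" for x
      proof -
        have "norm (cinner y (T x)) \<le> norm y * norm (T x)" by (rule cauchy_schwarz)
        also have "\<dots> \<le> norm y * (C * norm x)" using C by (simp add: mult_left_mono)
        finally show ?thesis by (simp add: ac_simps)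
      qed
    qed
    then obtain w where "\<forall>x. cinner y (T x) = cinner w x" by blast
    hence "\<forall>x. cinner (T x) y = cinner x w"
      using cinner_commute[of "T _" y] cinner_commute[of _ w] by simp
    thus "\<exists>w. \<forall>x. cinner (T x) y = cinner x w" by blast
  qed
  then obtain S where "\<forall>y x. cinner (T x) y = cinner x (S y)" by metis
  hence "\<exists>S. \<forall>x y. cinner (T x) y = cinner x (S y)" by blast
  thus ?thesis unfolding adj_def by (rule someI_ex)
qed

lemma adj_unique:
  assumes S: "\<forall>x y. cinner (T x) y = cinner x (S y)"
  shows "adj T = S"
proof -
  have "\<exists>S. \<forall>x y. cinner (T x) y = cinner x (S y)" using S by blast
  hence A: "\<forall>x y. cinner (T x) y = cinner x (adj T y)" unfolding adj_def by (rule someI_ex)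
  show ?thesis
  proof (rule ext, rule cinner_ext_right)
    fix y z
    have "cinner z (adj T y) = cinner (T z) y" using A by simp
    also have "\<dots> = cinner z (S y)" using S by simp
    finally show "cinner z (adj T y) = cinner z (S y)" .
  qed
qed



lemmas cont_cinner_left[continuous_intros] = bounded_linear.continuous_on[OF bl_cinner_left]
lemmas cont_cinner_right[continuous_intros] = bounded_linear.continuous_on[OF bl_cinner_right]
lemmas cont_scaleC[continuous_intros] = bounded_linear.continuous_on[OF bl_scaleC]

lemma ccspan_props:
  fixes S :: "'a::complex_normed_vector set"
  shows "csubspace (ccspan S)" "closed (ccspan S)" "S \<subseteq> ccspan S"
    "\<And>M. csubspace M \<Longrightarrow> closed M \<Longrightarrow> S \<subseteq> M \<Longrightarrow> ccspan S \<subseteq> M"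
proof -
  show "csubspace (ccspan S)" unfolding ccspan_def csubspace_def by auto
  show "closed (ccspan S)" unfolding ccspan_def by (rule closed_Inter) auto
  show "S \<subseteq> ccspan S" unfolding ccspan_def by auto
  show "\<And>M. csubspace M \<Longrightarrow> closed M \<Longrightarrow> S \<subseteq> M \<Longrightarrow> ccspan S \<subseteq> M" unfolding ccspan_def by auto
qed

definition isoset :: "('a::complex_inner \<times> 'a) set \<Rightarrow> bool" where
  "isoset G \<longleftrightarrow> (0,0) \<in> G \<and>
     (\<forall>a b a' b'. (a,b)\<in>G \<longrightarrow> (a',b')\<in>G \<longrightarrow> (a+a', b+b') \<in> G) \<and>
     (\<forall>c a b. (a,b)\<in>G \<longrightarrow> (scaleC c a, scaleC c b) \<in> G) \<and>
     (\<forall>a b a' b'. (a,b)\<in>G \<longrightarrow> (a',b')\<in>G \<longrightarrow> cinner b b' = cinner a a')"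

lemma iso_0: "isoset G \<Longrightarrow> (0,0) \<in> G" by (simp add: isoset_def)
lemma iso_add: "isoset G \<Longrightarrow> (a,b)\<in>G \<Longrightarrow> (a',b')\<in>G \<Longrightarrow> (a+a', b+b') \<in> G" by (simp add: isoset_def)
lemma iso_scaleC: "isoset G \<Longrightarrow> (a,b)\<in>G \<Longrightarrow> (scaleC c a, scaleC c b) \<in> G" by (simp add: isoset_def)
lemma iso_cinner: "isoset G \<Longrightarrow> (a,b)\<in>G \<Longrightarrow> (a',b')\<in>G \<Longrightarrow> cinner b b' = cinner a a'"
  unfolding isoset_def by blast
lemma iso_diff: assumes "isoset G" "(a,b)\<in>G" "(a',b')\<in>G" shows "(a-a', b-b') \<in> G"
proof -
  have "(scaleC (-1) a', scaleC (-1) b') \<in> G" by (rule iso_scaleC[OF assms(1,3)])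
  hence "(a + scaleC (-1) a', b + scaleC (-1) b') \<in> G" by (rule iso_add[OF assms(1,2)])
  thus ?thesis by (simp add: scaleC_minus1)
qed
lemma iso_norm: assumes "isoset G" "(a,b)\<in>G" shows "norm b = norm a"
proof -
  have "cinner b b = cinner a a" by (rule iso_cinner[OF assms assms(2)])
  hence "(norm b)^2 = (norm a)^2" unfolding cinner_self of_real_eq_iff .
  thus ?thesis by (simp add: power2_eq_iff_nonneg)
qed
lemma iso_fun: assumes "isoset G" "(a,b)\<in>G" "(a,b')\<in>G" shows "b = b'"
proof -
  have "(a-a, b-b') \<in> G" by (rule iso_diff[OF assms])
  hence "norm (b - b') = norm (a - a)" by (rule iso_norm[OF assms(1)])
  thus ?thesis by simp
qed

lemma iso_closure:
  fixes G :: "('a::complex_inner \<times> 'a) set"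
  assumes iso: "isoset G" shows "isoset (closure G)"
proof -
  have z: "(0,0) \<in> closure G" using iso_0[OF iso] closure_subset by blast
  have add1: "(a+a', b+b') \<in> closure G" if "(a,b) \<in> closure G" "(a',b') \<in> G" for a b a' b'
  proof -
    let ?f = "\<lambda>p::'a\<times>'a. (fst p + a', snd p + b')"
    have "?f ` G \<subseteq> closure G" using iso_add[OF iso _ that(2)] closure_subset by fastforce
    hence "?f ` closure G \<subseteq> closure G"
      by (intro image_closure_subset) (auto intro!: continuous_intros)
    thus ?thesis using that(1) by force
  qed
  have add: "(a+a', b+b') \<in> closure G" if "(a,b) \<in> closure G" "(a',b') \<in> closure G" for a b a' b'
  proof -
    let ?f = "\<lambda>p::'a\<times>'a. (a + fst p, b + snd p)"
    have "?f ` G \<subseteq> closure G" using add1[OF that(1)] by fastforce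
    hence "?f ` closure G \<subseteq> closure G"
      by (intro image_closure_subset) (auto intro!: continuous_intros)
    thus ?thesis using that(2) by force
  qed
  have sc: "(scaleC c a, scaleC c b) \<in> closure G" if "(a,b) \<in> closure G" for c a b
  proof -
    let ?f = "\<lambda>p::'a\<times>'a. (scaleC c (fst p), scaleC c (snd p))"
    have "?f ` G \<subseteq> closure G" using iso_scaleC[OF iso] closure_subset by fastforce
    hence "?f ` closure G \<subseteq> closure G"
      by (intro image_closure_subset) (auto intro!: continuous_intros)
    thus ?thesis using that by force
  qed
  have ci1: "cinner b b' = cinner a a'" if "(a,b) \<in> closure G" "(a',b') \<in> G" for a b a' b'
  proof -
    have "closure G \<subseteq> {p. cinner (snd p) b' = cinner (fst p) a'}"
    proof (rule closure_minimal)
      show "G \<subseteq> {p. cinner (snd p) b' = cinner (fst p) a'}" using iso_cinner[OF iso _ that(2)] by auto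
      show "closed {p::'a\<times>'a. cinner (snd p) b' = cinner (fst p) a'}"
        by (rule closed_Collect_eq) (auto intro!: continuous_intros)
    qed
    thus ?thesis using that(1) by auto
  qed
  have ci: "cinner b b' = cinner a a'" if "(a,b) \<in> closure G" "(a',b') \<in> closure G" for a b a' b'
  proof -
    have "closure G \<subseteq> {p. cinner b (snd p) = cinner a (fst p)}"
    proof (rule closure_minimal)
      show "G \<subseteq> {p. cinner b (snd p) = cinner a (fst p)}" using ci1[OF that(1)] by auto
      show "closed {p::'a\<times>'a. cinner b (snd p) = cinner a (fst p)}"
        by (rule closed_Collect_eq) (auto intro!: continuous_intros)
    qed
    thus ?thesis using that(2) by auto
  qed
  show ?thesis unfolding isoset_def using z add sc ci by blast
qed

lemma iso_swap: assumes "isoset G" shows "isoset (prod.swap ` G)"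
  unfolding isoset_def
proof (intro conjI allI impI)
  show "(0, 0) \<in> prod.swap ` G" using iso_0[OF assms] by force
  fix a b a' b' assume "(a, b) \<in> prod.swap ` G" "(a', b') \<in> prod.swap ` G"
  hence h: "(b,a) \<in> G" "(b',a') \<in> G" by auto
  show "(a + a', b + b') \<in> prod.swap ` G" using iso_add[OF assms h] by force
  show "cinner b b' = cinner a a'" using iso_cinner[OF assms h] by simp
next
  fix c a b assume "(a, b) \<in> prod.swap ` G"
  hence h: "(b,a) \<in> G" by auto
  show "(scaleC c a, scaleC c b) \<in> prod.swap ` G" using iso_scaleC[OF assms h] by force
qed

lemma closure_swap: "closure (prod.swap ` G) = prod.swap ` closure (G::('a::topological_space \<times> 'b::topological_space) set)"
proof -
  have gen: "prod.swap ` closure S \<subseteq> closure (prod.swap ` S)" for S :: "('c::topological_space \<times> 'd::topological_space) set"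
    by (rule image_closure_subset) (auto intro: continuous_on_swap closure_subset[THEN subsetD])
  have "prod.swap ` closure (prod.swap ` G) \<subseteq> closure (prod.swap ` prod.swap ` G)" by (rule gen)
  hence "prod.swap ` closure (prod.swap ` G) \<subseteq> closure G"
    by (simp add: image_image)
  have "closure (prod.swap ` G) \<subseteq> prod.swap ` closure G"
  proof
    fix x assume "x \<in> closure (prod.swap ` G)"
    hence "prod.swap x \<in> closure G" using \<open>prod.swap ` closure (prod.swap ` G) \<subseteq> closure G\<close> by blast
    hence "prod.swap (prod.swap x) \<in> prod.swap ` closure G" by (rule imageI)
    thus "x \<in> prod.swap ` closure G" by simp
  qed
  with gen[of G] show ?thesis by blast
qed

lemma iso_dom_sub: assumes "isoset G" shows "csubspace (fst ` G)"
  unfolding csubspace_def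
proof (intro conjI ballI allI)
  show "0 \<in> fst ` G" using iso_0[OF assms] by force
  fix x y assume "x \<in> fst ` G" "y \<in> fst ` G"
  then obtain b b' where "(x,b) \<in> G" "(y,b') \<in> G" by force
  thus "x + y \<in> fst ` G" using iso_add[OF assms] by force
next
  fix c x assume "x \<in> fst ` G"
  then obtain b where "(x,b) \<in> G" by force
  thus "scaleC c x \<in> fst ` G" using iso_scaleC[OF assms] by force
qed

lemma iso_dom_closed:
  fixes G :: "('a::chilbert_space \<times> 'a) set"
  assumes iso: "isoset G" and cl: "closed G" shows "closed (fst ` G)"
  unfolding closed_sequential_limits
proof (intro allI impI, elim conjE)
  fix y l assume yG: "\<forall>n. y n \<in> fst ` G" and yl: "y \<longlonglongrightarrow> l"
  have "\<forall>n. \<exists>b. (y n, b) \<in> G"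
  proof
    fix n
    obtain p where "p \<in> G" "y n = fst p" using yG by blast
    hence "(y n, snd p) \<in> G" by simp
    thus "\<exists>b. (y n, b) \<in> G" by blast
  qed
  hence "\<exists>b. \<forall>n. (y n, b n) \<in> G" by (rule choice)
  then obtain b where b: "\<And>n. (y n, b n) \<in> G" by blast
  have nb: "norm (b m - b n) = norm (y m - y n)" for m n
    using iso_norm[OF iso iso_diff[OF iso b b]] .
  have "Cauchy y" using yl by (rule LIMSEQ_imp_Cauchy)
  hence "Cauchy b" unfolding Cauchy_iff nb .
  then obtain l' where bl: "b \<longlonglongrightarrow> l'" using Cauchy_convergent_iff convergent_def by blast
  have "(\<lambda>n. (y n, b n)) \<longlonglongrightarrow> (l, l')" using yl bl by (rule tendsto_Pair)
  hence "(l, l') \<in> G" using closed_sequential_limits[THEN iffD1, OF cl, rule_format, of "\<lambda>n. (y n, b n)"] b by blast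
  thus "l \<in> fst ` G" by (metis fst_conv imageI)
qed



lemma polar:
  fixes H :: "'x::complex_vector \<Rightarrow> 'x \<Rightarrow> complex"
  assumes al: "\<And>x y z. H (x+y) z = H x z + H y z"
    and ar: "\<And>x y z. H x (y+z) = H x y + H x z"
    and sl: "\<And>c x y. H (scaleC c x) y = cnj c * H x y"
    and sr: "\<And>c x y. H x (scaleC c y) = c * H x y"
    and d: "\<And>x. H x x = 0"
  shows "H x y = 0"
proof -
  have "H (x+y) (x+y) = H x x + H x y + (H y x + H y y)" by (simp add: al ar)
  hence e1: "H x y + H y x = 0" using d by simp
  have A: "H x (x + scaleC \<i> y) = \<i> * H x y" using d by (simp add: ar sr)
  have B: "H y (x + scaleC \<i> y) = H y x" using d by (simp add: ar sr)
  have "H (x + scaleC \<i> y) (x + scaleC \<i> y) = H x (x + scaleC \<i> y) - \<i> * H y (x + scaleC \<i> y)"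
    by (simp add: al sl)
  hence "\<i> * H x y - \<i> * H y x = 0" unfolding A B d by simp
  hence "\<i> * (H x y - H y x) = 0" by (simp add: right_diff_distrib)
  hence e2: "H x y - H y x = 0" by simp
  from e1 e2 have "2 * H x y = 0" by (simp add: algebra_simps)
  thus ?thesis by simp
qed

lemma cross:
  fixes act :: "'x::complex_banach \<Rightarrow> 'a::cstar_algebra \<Rightarrow> 'x"
    and ip :: "'x \<Rightarrow> 'x \<Rightarrow> 'a"
    and \<Phi> \<Psi> :: "'x \<Rightarrow> 'h::chilbert_space \<Rightarrow> 'k::chilbert_space"
  assumes hm: "hilbert_module act ip" and P: "\<Phi> \<in> CP_maps ip" and Q: "\<Psi> \<in> CP_maps ip"
    and eq: "cp_equiv \<Phi> \<Psi>"
  shows "cinner (\<Phi> x h) (\<Phi> y k) = cinner (\<Psi> x h) (\<Psi> y k)"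
proof -
  obtain \<phi>1 :: "'a \<Rightarrow> 'h \<Rightarrow> 'h" where c1: "completely_positive \<phi>1" and e1: "\<And>x y. adj (\<Phi> x) \<circ> \<Phi> y = \<phi>1 (ip x y)"
    and b1: "\<And>x. bclinear (\<Phi> x)"
    using P unfolding CP_maps_def by blast
  obtain \<phi>2 :: "'a \<Rightarrow> 'h \<Rightarrow> 'h" where c2: "completely_positive \<phi>2" and e2: "\<And>x y. adj (\<Psi> x) \<circ> \<Psi> y = \<phi>2 (ip x y)"
    and b2: "\<And>x. bclinear (\<Psi> x)"
    using Q unfolding CP_maps_def by blast
  note hm' = hm[unfolded hilbert_module_def]
  have ipar: "ip x (y+z) = ip x y + ip x z" for x y z by (rule hm'[THEN conjunct2, THEN conjunct2, THEN conjunct2, THEN conjunct2, THEN conjunct2, THEN conjunct1, rule_format])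
  have ipsr: "ip x (scaleC c y) = scaleC c (ip x y)" for c x y by (rule hm'[THEN conjunct2, THEN conjunct2, THEN conjunct2, THEN conjunct2, THEN conjunct2, THEN conjunct2, THEN conjunct1, rule_format])
  have ipsym: "ip y x = cstar (ip x y)" for x y by (rule hm'[THEN conjunct2, THEN conjunct2, THEN conjunct2, THEN conjunct2, THEN conjunct2, THEN conjunct2, THEN conjunct2, THEN conjunct2, THEN conjunct1, rule_format])
  have ipal: "ip (y+z) x = ip y x + ip z x" for x y z
  proof -
    have "ip (y+z) x = cstar (ip x (y+z))" by (rule ipsym)
    also have "\<dots> = cstar (ip x y) + cstar (ip x z)" unfolding ipar cstar_add ..
    also have "\<dots> = ip y x + ip z x" unfolding ipsym[of y x] ipsym[of z x] ..
    finally show ?thesis .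
  qed
  have ipsl: "ip (scaleC c y) x = scaleC (cnj c) (ip y x)" for c x y
  proof -
    have "ip (scaleC c y) x = cstar (ip x (scaleC c y))" by (rule ipsym)
    also have "\<dots> = scaleC (cnj c) (cstar (ip x y))" unfolding ipsr cstar_scaleC ..
    also have "\<dots> = scaleC (cnj c) (ip y x)" unfolding ipsym[of y x] ..
    finally show ?thesis .
  qed
  note c1' = c1[unfolded completely_positive_def]
  note c2' = c2[unfolded completely_positive_def]
  have p1a: "\<phi>1 (a + b) k = \<phi>1 a k + \<phi>1 b k" for a b k
    using c1'[THEN conjunct2, THEN conjunct1, rule_format, of a b] by simp
  have p1s: "\<phi>1 (scaleC c a) k = scaleC c (\<phi>1 a k)" for c a k
    using c1'[THEN conjunct2, THEN conjunct2, THEN conjunct1, rule_format, of c a] by simp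
  have p2a: "\<phi>2 (a + b) k = \<phi>2 a k + \<phi>2 b k" for a b k
    using c2'[THEN conjunct2, THEN conjunct1, rule_format, of a b] by simp
  have p2s: "\<phi>2 (scaleC c a) k = scaleC c (\<phi>2 a k)" for c a k
    using c2'[THEN conjunct2, THEN conjunct2, THEN conjunct1, rule_format, of c a] by simp
  define H where "H = (\<lambda>x y. cinner h (\<phi>1 (ip x y) k) - cinner h (\<phi>2 (ip x y) k))"
  have dg: "\<phi>1 (ip x x) = \<phi>2 (ip x x)" for x
  proof -
    have "\<phi>1 (ip x x) = adj (\<Phi> x) \<circ> \<Phi> x" by (rule e1[symmetric])
    also have "\<dots> = adj (\<Psi> x) \<circ> \<Psi> x" using eq unfolding cp_equiv_def by blast
    also have "\<dots> = \<phi>2 (ip x x)" by (rule e2)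
    finally show ?thesis .
  qed
  have "H x y = 0"
  proof (rule polar)
    show "H (x+y) z = H x z + H y z" for x y z
      unfolding H_def ipal p1a p2a cinner_add_right by simp
    show "H x (y+z) = H x y + H x z" for x y z
      unfolding H_def ipar p1a p2a cinner_add_right by simp
    show "H (scaleC c x) y = cnj c * H x y" for c x y
      unfolding H_def ipsl p1s p2s cinner_scaleC_right by (simp add: right_diff_distrib)
    show "H x (scaleC c y) = c * H x y" for c x y
      unfolding H_def ipsr p1s p2s cinner_scaleC_right by (simp add: right_diff_distrib)
    show "H x x = 0" for x unfolding H_def dg by simp
  qed
  hence hh: "cinner h (\<phi>1 (ip x y) k) = cinner h (\<phi>2 (ip x y) k)" unfolding H_def by simp
  have "cinner (\<Phi> x h) (\<Phi> y k) = cinner h (adj (\<Phi> x) (\<Phi> y k))" using adj_exists[OF b1] by simp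
  also have "\<dots> = cinner h (\<phi>1 (ip x y) k)" using fun_cong[OF e1[of x y], of k] by simp
  also have "\<dots> = cinner h (\<phi>2 (ip x y) k)" by (rule hh)
  also have "\<dots> = cinner h (adj (\<Psi> x) (\<Psi> y k))" using fun_cong[OF e2[of x y], of k] by simp
  also have "\<dots> = cinner (\<Psi> x h) (\<Psi> y k)" using adj_exists[OF b2] by simp
  finally show ?thesis .
qed

lemma reverse:
  fixes \<Phi> \<Psi> :: "'x \<Rightarrow> 'h::chilbert_space \<Rightarrow> 'k::chilbert_space"
  assumes b1: "\<And>x. bclinear (\<Phi> x)" and b2: "\<And>x. bclinear (\<Psi> x)"
    and pi: "partial_isometry V"
    and VV: "adj V \<circ> V = proj (ccspan {\<Psi> x h | x h. True})"
    and fac: "\<forall>x. \<Phi> x = V \<circ> \<Psi> x"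
  shows "cp_equiv \<Phi> \<Psi>"
  unfolding cp_equiv_def
proof (intro allI ext cinner_ext_right)
  fix x k h
  define M where "M = ccspan {\<Psi> x h | x h. True}"
  have bV: "bclinear V" using pi unfolding partial_isometry_def by simp
  have inM: "\<Psi> x k \<in> M" using ccspan_props(3)[of "{\<Psi> x h | x h. True}"] unfolding M_def by blast
  have "cinner h ((adj (\<Phi> x) \<circ> \<Phi> x) k) = cinner (\<Phi> x h) (\<Phi> x k)" using adj_exists[OF b1] by simp
  also have "\<dots> = cinner (V (\<Psi> x h)) (V (\<Psi> x k))" using fac by simp
  also have "\<dots> = cinner (\<Psi> x h) (adj V (V (\<Psi> x k)))" using adj_exists[OF bV] by simp
  also have "\<dots> = cinner (\<Psi> x h) (proj M (\<Psi> x k))" using fun_cong[OF VV, of "\<Psi> x k"] unfolding M_def by simp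
  also have "\<dots> = cinner (\<Psi> x h) (\<Psi> x k)"
    using proj_id[OF ccspan_props(1,2) inM[unfolded M_def]] unfolding M_def by simp
  also have "\<dots> = cinner h ((adj (\<Psi> x) \<circ> \<Psi> x) k)" using adj_exists[OF b2] by simp
  finally show "cinner h ((adj (\<Phi> x) \<circ> \<Phi> x) k) = cinner h ((adj (\<Psi> x) \<circ> \<Psi> x) k)" .
qed



definition SP :: "('x \<Rightarrow> 'h \<Rightarrow> 'k::complex_vector) \<Rightarrow> ('x \<times> 'h) list \<Rightarrow> 'k" where
  "SP F l = sum_list (map (\<lambda>(x,h). F x h) l)"

lemma SP_Nil[simp]: "SP F [] = 0" by (simp add: SP_def)
lemma SP_Cons[simp]: "SP F (p # l) = F (fst p) (snd p) + SP F l" by (simp add: SP_def split_beta)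
lemma SP_append: "SP F (l1 @ l2) = SP F l1 + SP F l2" by (simp add: SP_def)
lemma SP_single: "SP F [(x,h)] = F x h" by simp

lemma SP_scale:
  assumes b: "\<And>x. bclinear (F x)"
  shows "SP F (map (\<lambda>p. (fst p, scaleC c (snd p))) l) = scaleC c (SP F l)"
proof (induction l)
  case Nil thus ?case by simp
next
  case (Cons p l)
  have "F (fst p) (scaleC c (snd p)) = scaleC c (F (fst p) (snd p))" using b unfolding bclinear_def by blast
  thus ?case using Cons by (simp add: scaleC_add_right)
qed

lemma SP_in: assumes "csubspace M" "\<And>x h. F x h \<in> M" shows "SP F l \<in> M"
  by (induction l) (auto intro: csubspace_add[OF assms(1)] csubspace_0[OF assms(1)] assms(2))

lemma SP_cinner1:
  assumes hyp: "\<And>x y h k. cinner (\<Phi> x h) (\<Phi> y k) = cinner (\<Psi> x h) (\<Psi> y k)"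
  shows "cinner (\<Phi> x h) (SP \<Phi> l) = cinner (\<Psi> x h) (SP \<Psi> l)"
  by (induction l) (simp_all add: cinner_add_right hyp)

lemma SP_cinner:
  assumes hyp: "\<And>x y h k. cinner (\<Phi> x h) (\<Phi> y k) = cinner (\<Psi> x h) (\<Psi> y k)"
  shows "cinner (SP \<Phi> l1) (SP \<Phi> l2) = cinner (SP \<Psi> l1) (SP \<Psi> l2)"
proof (induction l1)
  case Nil thus ?case by simp
next
  case (Cons p l1)
  have "cinner (\<Phi> (fst p) (snd p)) (SP \<Phi> l2) = cinner (\<Psi> (fst p) (snd p)) (SP \<Psi> l2)"
    by (rule SP_cinner1) (rule hyp)
  thus ?case using Cons by (simp add: cinner_add_left)
qed

lemma forward:
  fixes \<Phi> \<Psi> :: "'x \<Rightarrow> 'h::chilbert_space \<Rightarrow> 'k::chilbert_space"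
  assumes b1: "\<And>x. bclinear (\<Phi> x)" and b2: "\<And>x. bclinear (\<Psi> x)"
    and hyp: "\<And>x y h k. cinner (\<Phi> x h) (\<Phi> y k) = cinner (\<Psi> x h) (\<Psi> y k)"
  shows "\<exists>V. partial_isometry V \<and>
         V \<circ> adj V = proj (ccspan {\<Phi> x h | x h. True}) \<and>
         adj V \<circ> V = proj (ccspan {\<Psi> x h | x h. True}) \<and>
         (\<forall>x. \<Phi> x = V \<circ> \<Psi> x)"
proof -
  define M1 where "M1 = ccspan {\<Phi> x h | x h. True}"
  define M2 where "M2 = ccspan {\<Psi> x h | x h. True}"
  have s1: "csubspace M1" "closed M1" unfolding M1_def by (rule ccspan_props)+
  have s2: "csubspace M2" "closed M2" unfolding M2_def by (rule ccspan_props)+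
  have in1: "\<Phi> x h \<in> M1" for x h unfolding M1_def using ccspan_props(3)[of "{\<Phi> x h | x h. True}"] by blast
  have in2: "\<Psi> x h \<in> M2" for x h unfolding M2_def using ccspan_props(3)[of "{\<Psi> x h | x h. True}"] by blast
  define G where "G = range (\<lambda>l. (SP \<Psi> l, SP \<Phi> l))"
  have isoG: "isoset G" unfolding isoset_def
  proof (intro conjI allI impI)
    show "(0,0) \<in> G" unfolding G_def by (rule range_eqI[of _ _ "[]"]) simp
    fix a b a' b' assume "(a,b) \<in> G" "(a',b') \<in> G"
    then obtain l l' where "a = SP \<Psi> l" "b = SP \<Phi> l" "a' = SP \<Psi> l'" "b' = SP \<Phi> l'" unfolding G_def by blast
    thus "(a + a', b + b') \<in> G" unfolding G_def by (intro range_eqI[of _ _ "l @ l'"]) (simp add: SP_append)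
    show "cinner b b' = cinner a a'" using SP_cinner[OF hyp] \<open>a = _\<close> \<open>b = _\<close> \<open>a' = _\<close> \<open>b' = _\<close> by simp
  next
    fix c a b assume "(a,b) \<in> G"
    then obtain l where "a = SP \<Psi> l" "b = SP \<Phi> l" unfolding G_def by blast
    thus "(scaleC c a, scaleC c b) \<in> G" unfolding G_def
      by (intro range_eqI[of _ _ "map (\<lambda>p. (fst p, scaleC c (snd p))) l"]) (simp add: SP_scale b1 b2)
  qed
  have inG: "(\<Psi> x h, \<Phi> x h) \<in> G" for x h unfolding G_def by (rule range_eqI[of _ _ "[(x,h)]"]) simp
  define Gc where "Gc = closure G"
  have isoGc: "isoset Gc" unfolding Gc_def by (rule iso_closure[OF isoG])
  have clGc: "closed Gc" unfolding Gc_def by simp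
  have inGc: "(\<Psi> x h, \<Phi> x h) \<in> Gc" for x h unfolding Gc_def using inG closure_subset by blast
  have GcM: "Gc \<subseteq> M2 \<times> M1" unfolding Gc_def
  proof (rule closure_minimal)
    show "G \<subseteq> M2 \<times> M1" unfolding G_def using SP_in[OF s1(1) in1] SP_in[OF s2(1) in2] by auto
    show "closed (M2 \<times> M1)" using s1 s2 by (intro closed_Times)
  qed
  have isoS: "isoset (prod.swap ` Gc)" by (rule iso_swap[OF isoGc])
  have uniq1: "b = b'" if "(a,b) \<in> Gc" "(a,b') \<in> Gc" for a b b' by (rule iso_fun[OF isoGc that])
  have uniq2: "a = a'" if "(a,b) \<in> Gc" "(a',b) \<in> Gc" for a a' b
  proof -
    have "(b,a) \<in> prod.swap ` Gc" "(b,a') \<in> prod.swap ` Gc"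
      using that by (metis image_eqI swap_simp)+
    thus ?thesis by (rule iso_fun[OF isoS])
  qed
  have dom2: "M2 \<subseteq> fst ` Gc"
    unfolding M2_def
  proof (rule ccspan_props(4))
    show "csubspace (fst ` Gc)" by (rule iso_dom_sub[OF isoGc])
    show "closed (fst ` Gc)" by (rule iso_dom_closed[OF isoGc clGc])
    show "{\<Psi> x h | x h. True} \<subseteq> fst ` Gc"
    proof
      fix v assume "v \<in> {\<Psi> x h | x h. True}"
      then obtain x h where "v = \<Psi> x h" by blast
      thus "v \<in> fst ` Gc" using inGc[of x h] by (metis fst_conv image_eqI)
    qed
  qed
  have dom1: "M1 \<subseteq> fst ` (prod.swap ` Gc)"
    unfolding M1_def
  proof (rule ccspan_props(4))
    show "csubspace (fst ` (prod.swap ` Gc))" by (rule iso_dom_sub[OF isoS])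
    have "prod.swap ` Gc = closure (prod.swap ` G)" unfolding Gc_def closure_swap ..
    thus "closed (fst ` (prod.swap ` Gc))" using iso_dom_closed[OF iso_closure[OF iso_swap[OF isoG]]] by simp
    show "{\<Phi> x h | x h. True} \<subseteq> fst ` (prod.swap ` Gc)"
    proof
      fix v assume "v \<in> {\<Phi> x h | x h. True}"
      then obtain x h where "v = \<Phi> x h" by blast
      have "(\<Phi> x h, \<Psi> x h) \<in> prod.swap ` Gc" using inGc[of x h] by (metis image_eqI swap_simp)
      thus "v \<in> fst ` (prod.swap ` Gc)" using \<open>v = _\<close> by (metis fst_conv image_eqI)
    qed
  qed
  define V where "V = (\<lambda>y. THE b. (proj M2 y, b) \<in> Gc)"
  define W where "W = (\<lambda>z. THE a. (a, proj M1 z) \<in> Gc)"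
  have VG: "(proj M2 y, V y) \<in> Gc" for y
  proof -
    have "proj M2 y \<in> fst ` Gc" using dom2 proj_in[OF s2] by blast
    then obtain b where b: "(proj M2 y, b) \<in> Gc" by force
    show ?thesis unfolding V_def
    proof (rule theI[of _ b])
      show "(proj M2 y, b) \<in> Gc" by (rule b)
      fix b' assume "(proj M2 y, b') \<in> Gc"
      thus "b' = b" using b by (rule uniq1)
    qed
  qed
  have WG: "(W z, proj M1 z) \<in> Gc" for z
  proof -
    have "proj M1 z \<in> fst ` (prod.swap ` Gc)" using dom1 proj_in[OF s1] by blast
    then obtain a where a: "(a, proj M1 z) \<in> Gc" by force
    show ?thesis unfolding W_def
    proof (rule theI[of _ a])
      show "(a, proj M1 z) \<in> Gc" by (rule a)
      fix a' assume "(a', proj M1 z) \<in> Gc"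
      thus "a' = a" using a by (rule uniq2)
    qed
  qed
  have VM: "V y \<in> M1" for y using subsetD[OF GcM VG[of y]] by simp
  have WM: "W z \<in> M2" for z using subsetD[OF GcM WG[of z]] by simp
  have adjW: "cinner (V y) z = cinner y (W z)" for y z
  proof -
    have o1: "cinner (V y) (z - proj M1 z) = 0" by (rule proj_orth[OF s1 VM])
    have o2: "cinner (W z) (y - proj M2 y) = 0" by (rule proj_orth[OF s2 WM])
    have o2': "cinner (y - proj M2 y) (W z) = 0" using cinner_commute[of "y - proj M2 y" "W z"] o2 by simp
    have "cinner (V y) z = cinner (V y) (proj M1 z)" using o1 unfolding cinner_diff_right by simp
    also have "\<dots> = cinner (proj M2 y) (W z)" by (rule iso_cinner[OF isoGc VG WG])
    also have "\<dots> = cinner y (W z)" using o2' unfolding cinner_diff_left by simp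
    finally show ?thesis .
  qed
  have adjV: "adj V = W" by (rule adj_unique) (simp add: adjW)
  have VW: "V (W z) = proj M1 z" for z
  proof -
    have "(W z, V (W z)) \<in> Gc" using VG[of "W z"] proj_id[OF s2 WM] by simp
    thus ?thesis using WG[of z] by (rule uniq1)
  qed
  have WV: "W (V y) = proj M2 y" for y
  proof -
    have "(W (V y), V y) \<in> Gc" using WG[of "V y"] proj_id[OF s1 VM] by simp
    thus ?thesis using VG[of y] by (rule uniq2)
  qed
  have Vadd: "V (y + y') = V y + V y'" for y y'
  proof -
    have "(proj M2 y + proj M2 y', V y + V y') \<in> Gc" by (rule iso_add[OF isoGc VG VG])
    hence "(proj M2 (y + y'), V y + V y') \<in> Gc" by (simp add: proj_add[OF s2])
    thus ?thesis using VG[of "y + y'"] uniq1 by metis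
  qed
  have Vsc: "V (scaleC c y) = scaleC c (V y)" for c y
  proof -
    have "(scaleC c (proj M2 y), scaleC c (V y)) \<in> Gc" by (rule iso_scaleC[OF isoGc VG])
    hence "(proj M2 (scaleC c y), scaleC c (V y)) \<in> Gc" by (simp add: proj_scaleC[OF s2])
    thus ?thesis using VG[of "scaleC c y"] uniq1 by metis
  qed
  have Vnorm: "norm (V y) \<le> 1 * norm y" for y
    using iso_norm[OF isoGc VG[of y]] proj_norm[OF s2, of y] by simp
  have bV: "bclinear V" unfolding bclinear_def using Vadd Vsc Vnorm by blast
  have VWV: "V \<circ> adj V \<circ> V = V" unfolding adjV by (rule ext) (simp add: VW proj_id[OF s1 VM])
  have VadjV: "V \<circ> adj V = proj M1" unfolding adjV by (rule ext) (simp add: VW)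
  have adjVV: "adj V \<circ> V = proj M2" unfolding adjV by (rule ext) (simp add: WV)
  have fac: "\<forall>x. \<Phi> x = V \<circ> \<Psi> x"
  proof (intro allI ext)
    fix x h
    have vv: "(\<Psi> x h, V (\<Psi> x h)) \<in> Gc" using VG[of "\<Psi> x h"] proj_id[OF s2 in2] by simp
    have "\<Phi> x h = V (\<Psi> x h)" using inGc[of x h] vv by (rule uniq1)
    thus "\<Phi> x h = (V \<circ> \<Psi> x) h" by simp
  qed
  have pi: "partial_isometry V" unfolding partial_isometry_def using bV VWV by blast
  have e1: "V \<circ> adj V = proj (ccspan {\<Phi> x h | x h. True})" using VadjV unfolding M1_def .
  have e2: "adj V \<circ> V = proj (ccspan {\<Psi> x h | x h. True})" using adjVV unfolding M2_def .
  show ?thesis using pi e1 e2 fac by blast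
qed

theorem proposition2p3:
  fixes act :: "'x::complex_banach \<Rightarrow> 'a::cstar_algebra \<Rightarrow> 'x"
    and ip :: "'x \<Rightarrow> 'x \<Rightarrow> 'a"
    and \<Phi> \<Psi> :: "'x \<Rightarrow> 'h::chilbert_space \<Rightarrow> 'k::chilbert_space"
  assumes "hilbert_module act ip"
    and "full_module ip"
    and "\<Phi> \<in> CP_maps ip"
    and "\<Psi> \<in> CP_maps ip"
  shows "cp_equiv \<Phi> \<Psi> \<longleftrightarrow>
    (\<exists>V. partial_isometry V \<and>
         V \<circ> adj V = proj (ccspan {\<Phi> x h | x h. True}) \<and>
         adj V \<circ> V = proj (ccspan {\<Psi> x h | x h. True}) \<and>
         (\<forall>x. \<Phi> x = V \<circ> \<Psi> x))"
proof
  have b1: "\<And>x. bclinear (\<Phi> x)" using assms(3) unfolding CP_maps_def by blast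
  have b2: "\<And>x. bclinear (\<Psi> x)" using assms(4) unfolding CP_maps_def by blast
  {
    assume eq: "cp_equiv \<Phi> \<Psi>"
    show "\<exists>V. partial_isometry V \<and>
         V \<circ> adj V = proj (ccspan {\<Phi> x h | x h. True}) \<and>
         adj V \<circ> V = proj (ccspan {\<Psi> x h | x h. True}) \<and>
         (\<forall>x. \<Phi> x = V \<circ> \<Psi> x)"
      by (rule forward[OF b1 b2 cross[OF assms(1,3,4) eq]])
  }
  {
    assume "\<exists>V. partial_isometry V \<and>
         V \<circ> adj V = proj (ccspan {\<Phi> x h | x h. True}) \<and>
         adj V \<circ> V = proj (ccspan {\<Psi> x h | x h. True}) \<and>
         (\<forall>x. \<Phi> x = V \<circ> \<Psi> x)"
    then obtain V where "partial_isometry V" "adj V \<circ> V = proj (ccspan {\<Psi> x h | x h. True})"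
      "\<forall>x. \<Phi> x = V \<circ> \<Psi> x" by blast
    thus "cp_equiv \<Phi> \<Psi>" by (intro reverse[OF b1 b2])
  }
qed


end
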